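(* For $n\ge 2$, $$|\mathcal C_n(321)|=|\mathcal A_{n-1}|,$$ where $\mathcal A_{m}$ is the set of permutations in $S_{m}$ avoiding all six vincular patterns $\underline{32}\,\underline{41}$, $\underline{14}\,\underline{23}$, $\underline{41}\,\underline{32}$, $\underline{23}\,\underline{14}$, $\underline{23}\,\underline{1}$, $\underline{1}\,\underline{32}$.
   Context: Permutations of $[n]=\{1,\dots,n\}$ are written in one-line notation $\pi=\pi_1\cdots\pi_n$. A permutation contains $321$ if there are $i<j<k$ with $\pi_i>\pi_j>\pi_k$, and avoids $321$ otherwise. $\mathcal C_n$ is the set of cyclic permutations of $[n]$ (a single $n$-cycle), and $\mathcal C_n(321)$ those avoiding $321$. Vincular patterns: for a sequence $w=w_1\cdots w_N$ of distinct integers, - $w$ contains $\underline{32}\,\underline{41}$ if there are $i,j$ with $i+2\le j\le N-1$ and $w_{j+1}<w_{i+1}<w_i<w_j$; - $w$ contains $\underline{14}\,\underline{23}$ if there are such $i,j$ with $w_i<w_j<w_{j+1}<w_{i+1}$; - $w$ contains $\underline{41}\,\underline{32}$ if there are such $i,j$ with $w_{i+1}<w_{j+1}<w_j<w_i$; - $w$ contains $\underline{23}\,\underline{14}$ if there are such $i,j$ with $w_j<w_i<w_{i+1}<w_{j+1}$; - $w$ contains $\underline{23}\,\underline{1}$ if there is $i$ with $i+1\le N-1$ and $w_N<w_i<w_{i+1}$; - $w$ contains $\underline{1}\,\underline{32}$ if there is $j$ with $2\le j\le N-1$ and $w_1<w_{j+1}<w_j$. $w$ avoids a pattern if it does not contain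 it. *)

theory Defs
  imports "HOL-Combinatorics.Permutations"
begin

(* Permutations of [n] = {1..n} are functions p :: nat => nat with p permutes {1..n};
   the one-line notation is p 1, p 2, ..., p n (positions are 1-indexed). *)

definition contains321 :: "nat \<Rightarrow> (nat \<Rightarrow> nat) \<Rightarrow> bool" where
  "contains321 n p \<longleftrightarrow> (\<exists>i j k. 1 \<le> i \<and> i < j \<and> j < k \<and> k \<le> n \<and> p i > p j \<and> p j > p k)"

(* cyclic permutation of [n]: a single n-cycle, i.e. the orbit of 1 is all of [n] *)
definition cyclic_perm :: "nat \<Rightarrow> (nat \<Rightarrow> nat) \<Rightarrow> bool" where
  "cyclic_perm n p \<longleftrightarrow> p permutes {1..n} \<and> (\<forall>x\<in>{1..n}. \<exists>k. (p ^^ k) 1 = x)"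

definition C321 :: "nat \<Rightarrow> (nat \<Rightarrow> nat) set" where
  "C321 n = {p. cyclic_perm n p \<and> \<not> contains321 n p}"

definition has_3241 :: "nat \<Rightarrow> (nat \<Rightarrow> nat) \<Rightarrow> bool" where
  "has_3241 N w \<longleftrightarrow> (\<exists>i j. 1 \<le> i \<and> i + 2 \<le> j \<and> j \<le> N - 1 \<and>
      w (j+1) < w (i+1) \<and> w (i+1) < w i \<and> w i < w j)"

definition has_1423 :: "nat \<Rightarrow> (nat \<Rightarrow> nat) \<Rightarrow> bool" where
  "has_1423 N w \<longleftrightarrow> (\<exists>i j. 1 \<le> i \<and> i + 2 \<le> j \<and> j \<le> N - 1 \<and>
      w i < w j \<and> w j < w (j+1) \<and> w (j+1) < w (i+1))"

definition has_4132 :: "nat \<Rightarrow> (nat \<Rightarrow> nat) \<Rightarrow> bool" where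
  "has_4132 N w \<longleftrightarrow> (\<exists>i j. 1 \<le> i \<and> i + 2 \<le> j \<and> j \<le> N - 1 \<and>
      w (i+1) < w (j+1) \<and> w (j+1) < w j \<and> w j < w i)"

definition has_2314 :: "nat \<Rightarrow> (nat \<Rightarrow> nat) \<Rightarrow> bool" where
  "has_2314 N w \<longleftrightarrow> (\<exists>i j. 1 \<le> i \<and> i + 2 \<le> j \<and> j \<le> N - 1 \<and>
      w j < w i \<and> w i < w (i+1) \<and> w (i+1) < w (j+1))"

definition has_231 :: "nat \<Rightarrow> (nat \<Rightarrow> nat) \<Rightarrow> bool" where
  "has_231 N w \<longleftrightarrow> (\<exists>i. 1 \<le> i \<and> i + 1 \<le> N - 1 \<and> w N < w i \<and> w i < w (i+1))"

definition has_132 :: "nat \<Rightarrow> (nat \<Rightarrow> nat) \<Rightarrow> bool" where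
  "has_132 N w \<longleftrightarrow> (\<exists>j. 2 \<le> j \<and> j \<le> N - 1 \<and> w 1 < w (j+1) \<and> w (j+1) < w j)"

definition A_set :: "nat \<Rightarrow> (nat \<Rightarrow> nat) set" where
  "A_set m = {p. p permutes {1..m} \<and> \<not> has_3241 m p \<and> \<not> has_1423 m p \<and>
     \<not> has_4132 m p \<and> \<not> has_2314 m p \<and> \<not> has_231 m p \<and> \<not> has_132 m p}"

end

theory Submission
  imports Defs
begin


lemma L1:
  assumes p: "\<pi> permutes {1..n}"
  shows "contains321 n \<pi> \<longleftrightarrow>
    (\<exists>a b. 1\<le>a \<and> a<b \<and> b\<le>n \<and> b<\<pi> b \<and> \<pi> b<\<pi> a) \<or>
    (\<exists>a b. 1\<le>a \<and> a<b \<and> b\<le>n \<and> \<pi> b<\<pi> a \<and> \<pi> a\<le>a)"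
proof
  assume "contains321 n \<pi>"
  then obtain a b c where h: "1 \<le> a" "a < b" "b < c" "c \<le> n" "\<pi> a > \<pi> b" "\<pi> b > \<pi> c"
    unfolding contains321_def by blast
  show "(\<exists>a b. 1\<le>a \<and> a<b \<and> b\<le>n \<and> b<\<pi> b \<and> \<pi> b<\<pi> a) \<or>
    (\<exists>a b. 1\<le>a \<and> a<b \<and> b\<le>n \<and> \<pi> b<\<pi> a \<and> \<pi> a\<le>a)"
  proof (cases "b < \<pi> b")
    case True then show ?thesis using h by (intro disjI1 exI[of _ a] exI[of _ b]) auto
  next
    case False then show ?thesis using h by (intro disjI2 exI[of _ b] exI[of _ c]) auto
  qed
next
  have inj: "inj \<pi>" using p permutes_inj by blast
  have img: "\<pi> ` {1..n} = {1..n}" using p permutes_image by blast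
  have inS: "\<And>x. x \<in> {1..n} \<Longrightarrow> \<pi> x \<in> {1..n}" using img by blast
  have pre: "\<And>v. v \<in> {1..n} \<Longrightarrow> \<exists>c\<in>{1..n}. \<pi> c = v" using img by (metis imageE)
  assume "(\<exists>a b. 1\<le>a \<and> a<b \<and> b\<le>n \<and> b<\<pi> b \<and> \<pi> b<\<pi> a) \<or>
    (\<exists>a b. 1\<le>a \<and> a<b \<and> b\<le>n \<and> \<pi> b<\<pi> a \<and> \<pi> a\<le>a)"
  then show "contains321 n \<pi>"
  proof
    assume "\<exists>a b. 1\<le>a \<and> a<b \<and> b\<le>n \<and> b<\<pi> b \<and> \<pi> b<\<pi> a"
    then obtain a b where h: "1\<le>a" "a<b" "b\<le>n" "b<\<pi> b" "\<pi> b<\<pi> a" by blast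
    have pbn: "\<pi> b \<le> n" using inS[of b] h by auto
    show ?thesis
    proof (rule ccontr)
      assume nc: "\<not> contains321 n \<pi>"
      have ge: "\<And>c. b < c \<Longrightarrow> c \<le> n \<Longrightarrow> \<pi> b < \<pi> c"
      proof -
        fix c assume c: "b < c" "c \<le> n"
        have "\<not> \<pi> c < \<pi> b" using nc c h unfolding contains321_def by blast
        moreover have "\<pi> c \<noteq> \<pi> b" using inj c by (metis injD less_irrefl)
        ultimately show "\<pi> b < \<pi> c" by simp
      qed
      have sub: "{1..<\<pi> b} \<subseteq> \<pi> ` ({1..<b} - {a})"
      proof
        fix v assume v: "v \<in> {1..<\<pi> b}"
        then have "v \<in> {1..n}" using pbn by auto
        then obtain c where c: "c \<in> {1..n}" "\<pi> c = v" using pre by blast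
        have "c \<noteq> a" using c v h by auto
        moreover have "c \<noteq> b" using c v by auto
        moreover have "\<not> b < c" using ge[of c] c v by auto
        ultimately show "v \<in> \<pi> ` ({1..<b} - {a})" using c by auto
      qed
      have "card {1..<\<pi> b} \<le> card (\<pi> ` ({1..<b} - {a}))" by (rule card_mono) (use sub in auto)
      also have "\<dots> \<le> card ({1..<b} - {a})" by (rule card_image_le) auto
      also have "\<dots> = b - 2" using h by (simp add: card_Diff_singleton)
      finally show False using h by simp
    qed
  next
    assume "\<exists>a b. 1\<le>a \<and> a<b \<and> b\<le>n \<and> \<pi> b<\<pi> a \<and> \<pi> a\<le>a"
    then obtain a b where h: "1\<le>a" "a<b" "b\<le>n" "\<pi> b<\<pi> a" "\<pi> a\<le>a" by blast
    show ?thesis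
    proof (rule ccontr)
      assume nc: "\<not> contains321 n \<pi>"
      have le: "\<And>c. 1 \<le> c \<Longrightarrow> c < a \<Longrightarrow> \<pi> c < \<pi> a"
      proof -
        fix c assume c: "1 \<le> c" "c < a"
        have "\<not> \<pi> c > \<pi> a" using nc c h unfolding contains321_def by blast
        moreover have "\<pi> c \<noteq> \<pi> a" using inj c by (metis injD less_irrefl)
        ultimately show "\<pi> c < \<pi> a" by simp
      qed
      have sub: "{\<pi> a<..n} \<subseteq> \<pi> ` ({a<..n} - {b})"
      proof
        fix v assume v: "v \<in> {\<pi> a<..n}"
        then have "v \<in> {1..n}" by auto
        then obtain c where c: "c \<in> {1..n}" "\<pi> c = v" using pre by blast
        have "c \<noteq> a" using c v h by auto
        moreover have "c \<noteq> b" using c v h by auto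
        moreover have "\<not> c < a" using le[of c] c v by auto
        ultimately show "v \<in> \<pi> ` ({a<..n} - {b})" using c by auto
      qed
      have "card {\<pi> a<..n} \<le> card (\<pi> ` ({a<..n} - {b}))" by (rule card_mono) (use sub in auto)
      also have "\<dots> \<le> card ({a<..n} - {b})" by (rule card_image_le) auto
      also have "\<dots> = n - a - 1" using h by (simp add: card_Diff_singleton)
      finally show False using h by simp
    qed
  qed
qed



lemma L2:
  fixes w \<pi> :: "nat \<Rightarrow> nat" and m :: nat
  assumes w: "w permutes {1..m}" and m: "1 \<le> m"
    and hw: "\<And>i. 1\<le>i \<Longrightarrow> i\<le>m \<Longrightarrow> \<pi>(w i) = w(Suc i)"
    and hn: "\<pi> (Suc m) = w 1"
  shows "((\<exists>a b. 1\<le>a \<and> a<b \<and> b\<le>Suc m \<and> b<\<pi> b \<and> \<pi> b<\<pi> a) \<or>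
    (\<exists>a b. 1\<le>a \<and> a<b \<and> b\<le>Suc m \<and> \<pi> b<\<pi> a \<and> \<pi> a\<le>a))
   \<longleftrightarrow> has_3241 m w \<or> has_1423 m w \<or> has_4132 m w \<or> has_2314 m w \<or> has_231 m w \<or> has_132 m w"
proof -
  have inj: "\<And>x y. w x = w y \<longleftrightarrow> x = y" using w permutes_inj by (metis injD)
  have out: "\<And>x. x \<notin> {1..m} \<Longrightarrow> w x = x" using w by (simp add: permutes_not_in)
  have wSm: "w (Suc m) = Suc m" using out by simp
  have img: "w ` {1..m} = {1..m}" using w permutes_image by blast
  have inS: "\<And>x. 1 \<le> x \<Longrightarrow> x \<le> m \<Longrightarrow> 1 \<le> w x \<and> w x \<le> m" using img by auto
  have pre: "\<exists>c. 1 \<le> c \<and> c \<le> m \<and> w c = v" if "1 \<le> v" "v \<le> m" for v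
  proof -
    have "v \<in> w ` {1..m}" using img that by simp
    then show ?thesis by force
  qed
  have hw': "\<And>i. 1\<le>i \<Longrightarrow> i<m \<Longrightarrow> \<pi>(w i) = w(Suc i)" using hw by simp
  have hm: "\<pi>(w m) = Suc m" using hw[of m] m wSm by simp
  show ?thesis
  proof
    assume "(\<exists>a b. 1\<le>a \<and> a<b \<and> b\<le>Suc m \<and> b<\<pi> b \<and> \<pi> b<\<pi> a) \<or>
      (\<exists>a b. 1\<le>a \<and> a<b \<and> b\<le>Suc m \<and> \<pi> b<\<pi> a \<and> \<pi> a\<le>a)"
    then show "has_3241 m w \<or> has_1423 m w \<or> has_4132 m w \<or> has_2314 m w \<or> has_231 m w \<or> has_132 m w"
    proof
      assume "\<exists>a b. 1\<le>a \<and> a<b \<and> b\<le>Suc m \<and> b<\<pi> b \<and> \<pi> b<\<pi> a"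
      then obtain a b where h: "1\<le>a" "a<b" "b\<le>Suc m" "b<\<pi> b" "\<pi> b<\<pi> a" by blast
      obtain i where i: "1 \<le> i" "i \<le> m" "w i = a" using pre[of a] h by auto
      have bm: "b \<le> m"
      proof (rule ccontr)
        assume "\<not> b \<le> m" then have bS: "b = Suc m" using h by simp
        then have "\<pi> b = w 1" using hn by simp
        then show False using inS[of 1] m h bS by simp
      qed
      obtain j where j: "1 \<le> j" "j \<le> m" "w j = b" using pre[of b] h bm by auto
      show ?thesis
      proof (cases "i = m")
        case True
        then have pa: "\<pi> a = Suc m" using hm i by simp
        have jm: "j < m"
        proof (rule ccontr)
          assume "\<not> j < m" then have "j = m" using j by simp
          then show False using h i j True by simp
        qed
        have pb: "\<pi> b = w (Suc j)" using hw j by blast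
        have "Suc j \<noteq> m" using pb h i True by auto
        then have "has_231 m w" unfolding has_231_def
          using j jm True i h pb by (intro exI[of _ j]) auto
        then show ?thesis by simp
      next
        case False
        then have im: "i < m" using i by simp
        have pa: "\<pi> a = w (Suc i)" using hw i by blast
        have pb: "\<pi> b = w (Suc j)" using hw j by blast
        have jm: "j < m"
        proof (rule ccontr)
          assume "\<not> j < m" then have "j = m" using j by simp
          then have "\<pi> b = Suc m" using hm j by simp
          moreover have "\<pi> a \<le> m" using pa inS[of "Suc i"] im by simp
          ultimately show False using h by simp
        qed
        have d1: "i \<noteq> j" using i j h by auto
        have d2: "j \<noteq> Suc i" using pa j h by auto
        have d3: "i \<noteq> Suc j" using pb i h by auto
        show ?thesis
        proof (cases "i < j")
          case True
          then have "has_1423 m w" unfolding has_1423_def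
            using i j jm d2 h pa pb by (intro exI[of _ i] exI[of _ j]) auto
          then show ?thesis by simp
        next
          case False
          then have "has_2314 m w" unfolding has_2314_def
            using i j im d1 d3 h pa pb by (intro exI[of _ j] exI[of _ i]) auto
          then show ?thesis by simp
        qed
      qed
    next
      assume "\<exists>a b. 1\<le>a \<and> a<b \<and> b\<le>Suc m \<and> \<pi> b<\<pi> a \<and> \<pi> a\<le>a"
      then obtain a b where h: "1\<le>a" "a<b" "b\<le>Suc m" "\<pi> b<\<pi> a" "\<pi> a\<le>a" by blast
      obtain i where i: "1 \<le> i" "i \<le> m" "w i = a" using pre[of a] h by auto
      have im: "i < m"
      proof (rule ccontr)
        assume "\<not> i < m" then have "i = m" using i by simp
        then show False using hm i h by simp
      qed
      have pa: "\<pi> a = w (Suc i)" using hw i by blast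
      have ne: "\<pi> a \<noteq> a" using pa i inj[of "Suc i" i] by simp
      show ?thesis
      proof (cases "b = Suc m")
        case True
        then have pb: "\<pi> b = w 1" using hn by simp
        have "i \<noteq> 1" using pb pa i h by auto
        then have "has_132 m w" unfolding has_132_def
          using i im h pa pb ne by (intro exI[of _ i]) auto
        then show ?thesis by simp
      next
        case False
        then obtain j where j: "1 \<le> j" "j \<le> m" "w j = b" using pre[of b] h by auto
        have pb: "\<pi> b = w (Suc j)" using hw j by blast
        have jm: "j < m"
        proof (rule ccontr)
          assume "\<not> j < m" then have "j = m" using j by simp
          then have "\<pi> b = Suc m" using hm j by simp
          moreover have "\<pi> a \<le> m" using pa inS[of "Suc i"] im by simp
          ultimately show False using h by simp
        qed
        have d1: "i \<noteq> j" using i j h by auto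
        have d2: "j \<noteq> Suc i" using pa j h by auto
        have d3: "i \<noteq> Suc j" using pb i h by auto
        show ?thesis
        proof (cases "i < j")
          case True
          then have "has_3241 m w" unfolding has_3241_def
            using i j jm d2 h pa pb ne by (intro exI[of _ i] exI[of _ j]) auto
          then show ?thesis by simp
        next
          case False
          then have "has_4132 m w" unfolding has_4132_def
            using i j im d1 d3 h pa pb ne by (intro exI[of _ j] exI[of _ i]) auto
          then show ?thesis by simp
        qed
      qed
    qed
  next
    have inS': "\<And>x. 1 \<le> x \<Longrightarrow> x \<le> m \<Longrightarrow> w x < Suc m" using inS by fastforce
    assume "has_3241 m w \<or> has_1423 m w \<or> has_4132 m w \<or> has_2314 m w \<or> has_231 m w \<or> has_132 m w"
    then show "(\<exists>a b. 1\<le>a \<and> a<b \<and> b\<le>Suc m \<and> b<\<pi> b \<and> \<pi> b<\<pi> a) \<or>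
      (\<exists>a b. 1\<le>a \<and> a<b \<and> b\<le>Suc m \<and> \<pi> b<\<pi> a \<and> \<pi> a\<le>a)"
    proof (elim disjE)
      assume "has_3241 m w"
      then obtain i j where h: "1 \<le> i" "i + 2 \<le> j" "j \<le> m - 1"
        "w (j+1) < w (i+1)" "w (i+1) < w i" "w i < w j" unfolding has_3241_def by blast
      have lt: "i < m" "j < m" "1 \<le> j" using h by linarith+
      have e: "\<pi> (w i) = w (i+1)" "\<pi> (w j) = w (j+1)" using hw' lt h(1) by simp_all
      have "1 \<le> w i" "w j \<le> Suc m" using inS[of i] inS[of j] lt h(1) by simp_all
      then show ?thesis using h e by (intro disjI2 exI[of _ "w i"] exI[of _ "w j"]) simp
    next
      assume "has_1423 m w"
      then obtain i j where h: "1 \<le> i" "i + 2 \<le> j" "j \<le> m - 1"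
        "w i < w j" "w j < w (j+1)" "w (j+1) < w (i+1)" unfolding has_1423_def by blast
      have lt: "i < m" "j < m" "1 \<le> j" using h by linarith+
      have e: "\<pi> (w i) = w (i+1)" "\<pi> (w j) = w (j+1)" using hw' lt h(1) by simp_all
      have "1 \<le> w i" "w j \<le> Suc m" using inS[of i] inS[of j] lt h(1) by simp_all
      then show ?thesis using h e by (intro disjI1 exI[of _ "w i"] exI[of _ "w j"]) simp
    next
      assume "has_4132 m w"
      then obtain i j where h: "1 \<le> i" "i + 2 \<le> j" "j \<le> m - 1"
        "w (i+1) < w (j+1)" "w (j+1) < w j" "w j < w i" unfolding has_4132_def by blast
      have lt: "i < m" "j < m" "1 \<le> j" using h by linarith+
      have e: "\<pi> (w i) = w (i+1)" "\<pi> (w j) = w (j+1)" using hw' lt h(1) by simp_all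
      have "1 \<le> w j" "w i \<le> Suc m" using inS[of i] inS[of j] lt h(1) by simp_all
      then show ?thesis using h e by (intro disjI2 exI[of _ "w j"] exI[of _ "w i"]) simp
    next
      assume "has_2314 m w"
      then obtain i j where h: "1 \<le> i" "i + 2 \<le> j" "j \<le> m - 1"
        "w j < w i" "w i < w (i+1)" "w (i+1) < w (j+1)" unfolding has_2314_def by blast
      have lt: "i < m" "j < m" "1 \<le> j" using h by linarith+
      have e: "\<pi> (w i) = w (i+1)" "\<pi> (w j) = w (j+1)" using hw' lt h(1) by simp_all
      have "1 \<le> w j" "w i \<le> Suc m" using inS[of i] inS[of j] lt h(1) by simp_all
      then show ?thesis using h e by (intro disjI1 exI[of _ "w j"] exI[of _ "w i"]) simp
    next
      assume "has_231 m w"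
      then obtain i where h: "1 \<le> i" "i + 1 \<le> m - 1" "w m < w i" "w i < w (i+1)"
        unfolding has_231_def by blast
      have lt: "i < m" "Suc i < m" using h by linarith+
      have e: "\<pi> (w i) = w (i+1)" using hw' lt h(1) by simp
      have "1 \<le> w m" "w i \<le> Suc m" "w (Suc i) < Suc m" using inS[of i] inS[of m] inS'[of "Suc i"] lt h(1) m by simp_all
      then show ?thesis using h e hm by (intro disjI1 exI[of _ "w m"] exI[of _ "w i"]) simp
    next
      assume "has_132 m w"
      then obtain j where h: "2 \<le> j" "j \<le> m - 1" "w 1 < w (j+1)" "w (j+1) < w j"
        unfolding has_132_def by blast
      have lt: "j < m" "1 \<le> j" using h by linarith+
      have e: "\<pi> (w j) = w (j+1)" using hw' lt by simp
      have "1 \<le> w j" "w j < Suc m" using inS[of j] inS'[of j] lt by simp_all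
      then show ?thesis using h e hn by (intro disjI2 exI[of _ "w j"] exI[of _ "Suc m"]) simp
    qed
  qed
qed



definition sig :: "nat \<Rightarrow> nat \<Rightarrow> nat" where
  "sig n i = (if 1 \<le> i \<and> i < n then Suc i else if i = n then 1 else i)"

definition Fm :: "nat \<Rightarrow> (nat \<Rightarrow> nat) \<Rightarrow> nat \<Rightarrow> nat" where
  "Fm n w = w \<circ> sig n \<circ> inv w"

definition Gm :: "nat \<Rightarrow> (nat \<Rightarrow> nat) \<Rightarrow> nat \<Rightarrow> nat" where
  "Gm n p = (\<lambda>i. if 1 \<le> i \<and> i < n then (p ^^ i) n else i)"

lemma sig_perm: assumes "1 \<le> n" shows "sig n permutes {1..n}"
proof (rule bij_imp_permutes)
  have inj: "inj_on (sig n) {1..n}"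
    unfolding inj_on_def sig_def by (auto split: if_splits)
  have sub: "sig n ` {1..n} \<subseteq> {1..n}" unfolding sig_def using assms by auto
  have "sig n ` {1..n} = {1..n}" by (rule endo_inj_surj[OF _ sub inj]) simp
  then show "bij_betw (sig n) {1..n} {1..n}" using inj by (simp add: bij_betw_def)
  show "\<And>x. x \<notin> {1..n} \<Longrightarrow> sig n x = x" unfolding sig_def using assms by auto
qed

lemma sig_pow: assumes "1 \<le> n" "1 \<le> a" "a \<le> n"
  shows "(sig n ^^ k) a = (a - 1 + k) mod n + 1"
proof (induction k)
  case 0 then show ?case using assms by simp
next
  case (Suc k)
  define r where "r = (a - 1 + k) mod n"
  have r: "r < n" unfolding r_def using assms by simp
  have "(sig n ^^ Suc k) a = sig n (r + 1)" using Suc r_def by simp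
  also have "\<dots> = (a - 1 + Suc k) mod n + 1"
    using r unfolding sig_def r_def by (auto simp: mod_Suc)
  finally show ?case .
qed

lemma fwd:
  fixes w :: "nat \<Rightarrow> nat" and m :: nat
  assumes w: "w permutes {1..m}" and m: "1 \<le> m"
  shows "Fm (Suc m) w permutes {1..Suc m}"
    "\<And>x. Fm (Suc m) w (w x) = w (sig (Suc m) x)"
    "\<And>k x. (Fm (Suc m) w ^^ k) (w x) = w ((sig (Suc m) ^^ k) x)"
    "cyclic_perm (Suc m) (Fm (Suc m) w)"
    "Gm (Suc m) (Fm (Suc m) w) = w"
proof -
  define n where "n = Suc m"
  define p where "p = Fm n w"
  have n1: "1 \<le> n" unfolding n_def by simp
  have wn: "w permutes {1..n}" using permutes_subset[OF w] unfolding n_def by auto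
  have sp: "sig n permutes {1..n}" using sig_perm n1 by blast
  have pp: "p permutes {1..n}" unfolding p_def Fm_def
    by (intro permutes_compose permutes_inv wn sp)
  then show "Fm (Suc m) w permutes {1..Suc m}" unfolding p_def n_def .
  have pw: "p (w x) = w (sig n x)" for x
    unfolding p_def Fm_def using permutes_inverses(2)[OF wn] by simp
  then show "\<And>x. Fm (Suc m) w (w x) = w (sig (Suc m) x)" unfolding p_def n_def .
  have pk: "(p ^^ k) (w x) = w ((sig n ^^ k) x)" for k x
    by (induction k) (simp_all add: pw)
  then show "\<And>k x. (Fm (Suc m) w ^^ k) (w x) = w ((sig (Suc m) ^^ k) x)" unfolding p_def n_def .
  have "\<exists>k. (p ^^ k) 1 = x" if x: "x \<in> {1..n}" for x
  proof -
    define a where "a = inv w 1"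
    define b where "b = inv w x"
    have ia: "a \<in> {1..n}" unfolding a_def using permutes_in_image[OF permutes_inv[OF wn]] n1 by simp
    have ib: "b \<in> {1..n}" unfolding b_def using permutes_in_image[OF permutes_inv[OF wn]] x by simp
    have wa: "w a = 1" "w b = x" unfolding a_def b_def using permutes_inverses(1)[OF wn] by auto
    have e: "a - 1 + (b + n - a) = (b - 1) + n" using ia ib by auto
    have "(p ^^ (b + n - a)) 1 = w ((sig n ^^ (b + n - a)) a)" using pk[of "b + n - a" a] wa by simp
    also have "\<dots> = w b"
    proof -
      have "(a - 1 + (b + n - a)) mod n + 1 = b" using ib unfolding e mod_add_self2 by (subst mod_less) auto
      then show ?thesis using sig_pow[OF n1, of a "b + n - a"] ia by simp
    qed
    finally show ?thesis using wa by blast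
  qed
  then show "cyclic_perm (Suc m) (Fm (Suc m) w)" unfolding cyclic_perm_def using pp
    unfolding p_def n_def by blast
  have wnn: "w n = n" using w unfolding n_def by (simp add: permutes_not_in)
  have "Gm n p i = w i" for i
  proof (cases "1 \<le> i \<and> i < n")
    case True
    have e: "n - 1 + i = (i - 1) + n" using True by auto
    have "(p ^^ i) n = w ((sig n ^^ i) n)" using pk[of i n] wnn by simp
    also have "\<dots> = w i"
    proof -
      have "(n - 1 + i) mod n + 1 = i" using True unfolding e mod_add_self2 by (subst mod_less) auto
      then show ?thesis using sig_pow[OF n1, of n i] n1 by simp
    qed
    finally show ?thesis unfolding Gm_def using True by simp
  next
    case False
    then have "i \<notin> {1..m}" unfolding n_def by auto
    then have "w i = i" using w by (simp add: permutes_not_in)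
    moreover have "Gm n p i = i" unfolding Gm_def if_not_P[OF False] ..
    ultimately show ?thesis by simp
  qed
  then show "Gm (Suc m) (Fm (Suc m) w) = w" unfolding p_def n_def by blast
qed

lemma bwd:
  fixes p :: "nat \<Rightarrow> nat" and m :: nat
  assumes c: "cyclic_perm (Suc m) p" and m: "1 \<le> m"
  shows "Gm (Suc m) p permutes {1..m}" "Fm (Suc m) (Gm (Suc m) p) = p"
proof -
  define n where "n = Suc m"
  have n2: "2 \<le> n" using m unfolding n_def by simp
  have pp: "p permutes {1..n}" using c unfolding cyclic_perm_def n_def by blast
  have orb: "\<And>x. x \<in> {1..n} \<Longrightarrow> \<exists>k. (p^^k) 1 = x" using c unfolding cyclic_perm_def n_def by blast
  have inj: "inj p" using pp permutes_inj by blast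
  have injk: "\<And>k. inj (p^^k)" using inj by simp
  have inS: "\<And>k x. x \<in> {1..n} \<Longrightarrow> (p^^k) x \<in> {1..n}" using permutes_in_funpow_image[OF pp] by blast
  have one: "(1::nat) \<in> {1..n}" using n2 by simp
  have shift: "(p^^(b-a)) x = x" if ab: "a \<le> b" "(p^^b) x = (p^^a) x" for a b x
  proof -
    have "p^^b = p^^a \<circ> p^^(b-a)" using ab(1) funpow_add[of a "b-a" p] by simp
    then have "(p^^a) ((p^^(b-a)) x) = (p^^a) x" using ab(2) by simp
    then show ?thesis using injk[of a] by (simp add: inj_eq)
  qed
  obtain q where q: "0 < q" "q \<le> n" "(p^^q) 1 = 1"
  proof -
    have "\<not> inj_on (\<lambda>k. (p^^k) 1) {0..n}"
    proof
      assume "inj_on (\<lambda>k. (p^^k) 1) {0..n}"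
      then have "card {0..n} \<le> card {1..n}" by (rule card_inj_on_le) (use inS one in auto)
      then show False by simp
    qed
    then obtain a b where ab: "a \<in> {0..n}" "b \<in> {0..n}" "a \<noteq> b" "(p^^a) 1 = (p^^b) 1"
      unfolding inj_on_def by blast
    show ?thesis
    proof (cases "a < b")
      case True
      then show ?thesis using shift[of a b 1] ab that[of "b - a"] by auto
    next
      case False
      then show ?thesis using shift[of b a 1] ab that[of "a - b"] by auto
    qed
  qed
  have pq: "(p^^(q*t)) 1 = 1" for t
  proof (induction t)
    case 0 then show ?case by simp
  next
    case (Suc t)
    have "p^^(q * Suc t) = p^^q \<circ> p^^(q*t)" by (simp add: funpow_add[symmetric])
    then show ?case using Suc q(3) by simp
  qed
  have per: "(p^^k) 1 = (p^^(k mod q)) 1" for k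
  proof -
    have "p^^k = p^^(k mod q) \<circ> p^^(q * (k div q))" 
      by (simp add: funpow_add[symmetric])
    then show ?thesis using pq by simp
  qed
  have cov: "{1..n} \<subseteq> (\<lambda>k. (p^^k) 1) ` {..<q}"
  proof
    fix x assume "x \<in> {1..n}"
    then obtain k where "(p^^k) 1 = x" using orb by blast
    then have "x = (p^^(k mod q)) 1" using per by simp
    moreover have "k mod q < q" using q by simp
    ultimately show "x \<in> (\<lambda>k. (p^^k) 1) ` {..<q}" by blast
  qed
  have "n \<le> q"
  proof -
    have "card {1..n} \<le> card ((\<lambda>k. (p^^k) 1) ` {..<q})" by (rule card_mono) (use cov in auto)
    also have "\<dots> \<le> card {..<q}" by (rule card_image_le) simp
    finally show ?thesis by simp
  qed
  then have qn: "q = n" using q by simp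
  have img: "(\<lambda>k. (p^^k) 1) ` {..<n} = {1..n}" using cov inS one qn by auto
  have injon: "inj_on (\<lambda>k. (p^^k) 1) {..<n}"
  proof (rule eq_card_imp_inj_on)
    show "card ((\<lambda>k. (p^^k) 1) ` {..<n}) = card {..<n}" unfolding img by simp
  qed simp
  obtain t where t: "t < n" "(p^^t) 1 = n"
  proof -
    have "n \<in> (\<lambda>k. (p^^k) 1) ` {..<n}" unfolding img using n2 by simp
    then show ?thesis using that by blast
  qed
  have pin: "(p^^i) n = (p^^((i+t) mod n)) 1" for i
  proof -
    have "(p^^i) n = (p^^(i+t)) 1" using t(2) by (simp add: funpow_add)
    then show ?thesis using per[of "i+t"] qn by simp
  qed
  have pnn: "(p^^n) n = n" using pin[of n] t by simp
  have ne: "(p^^i) n \<noteq> n" if i: "1 \<le> i" "i < n" for i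
  proof
    assume "(p^^i) n = n"
    then have "(p^^((i+t) mod n)) 1 = (p^^t) 1" using pin t by simp
    moreover have "(i+t) mod n < n" using n2 by simp
    ultimately have e: "(i+t) mod n = t" using injon t(1) unfolding inj_on_def by blast
    show False
    proof (cases "i + t < n")
      case True then show False using e i by simp
    next
      case False
      then have "(i+t) mod n = i + t - n" using i t by (simp add: mod_if)
      then show False using e i by simp
    qed
  qed
  define w where "w = Gm n p"
  have wS: "w i = (p^^i) n" if "1 \<le> i" "i < n" for i unfolding w_def Gm_def using that by simp
  have wO: "w i = i" if "\<not> (1 \<le> i \<and> i < n)" for i unfolding w_def Gm_def if_not_P[OF that] ..
  have winj: "inj_on w {1..m}"
  proof (rule inj_onI)
    have gen: "False" if ij: "i \<in> {1..m}" "j \<in> {1..m}" "i < j" "w i = w j" for i j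
    proof -
      have "(p^^j) n = (p^^i) n" using ij wS unfolding n_def by auto
      then have "(p^^(j-i)) n = n" using shift[of i j n] ij by simp
      moreover have "1 \<le> j - i" "j - i < n" using ij unfolding n_def by auto
      ultimately show False using ne by blast
    qed
    fix i j assume "i \<in> {1..m}" "j \<in> {1..m}" "w i = w j"
    then show "i = j" using gen[of i j] gen[of j i] by (metis linorder_neqE_nat)
  qed
  have wsub: "w ` {1..m} \<subseteq> {1..m}"
  proof
    fix y assume "y \<in> w ` {1..m}"
    then obtain i where i: "i \<in> {1..m}" "y = w i" by blast
    then have y: "y = (p^^i) n" using wS unfolding n_def by auto
    have "(p^^i) n \<in> {1..n}" using inS n2 by simp
    moreover have "(p^^i) n \<noteq> n" using ne i unfolding n_def by auto
    ultimately show "y \<in> {1..m}" using y unfolding n_def by auto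
  qed
  have wp: "w permutes {1..m}"
  proof (rule bij_imp_permutes)
    have "w ` {1..m} = {1..m}" by (rule endo_inj_surj[OF _ wsub winj]) simp
    then show "bij_betw w {1..m} {1..m}" using winj by (simp add: bij_betw_def)
    show "\<And>x. x \<notin> {1..m} \<Longrightarrow> w x = x" using wO unfolding n_def by auto
  qed
  then show "Gm (Suc m) p permutes {1..m}" unfolding w_def n_def .
  have key: "p (w x) = w (sig n x)" for x
  proof (cases "1 \<le> x \<and> x < n")
    case True
    then have sx: "sig n x = Suc x" unfolding sig_def by simp
    have "p (w x) = (p^^Suc x) n" using wS True by simp
    also have "\<dots> = w (Suc x)"
    proof (cases "Suc x < n")
      case True then show ?thesis using wS by simp
    next
      case False
      then have "Suc x = n" using True by simp
      then show ?thesis using pnn wO[of "Suc x"] by simp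
    qed
    finally show ?thesis using sx by simp
  next
    case False
    show ?thesis
    proof (cases "x = n")
      case True
      then have "sig n x = 1" unfolding sig_def by simp
      moreover have "w x = n" using wO False True by simp
      moreover have "w 1 = (p^^1) n" using wS n2 by simp
      ultimately show ?thesis by simp
    next
      case xn: False
      then have "sig n x = x" unfolding sig_def using False by auto
      moreover have "w x = x" using wO False by simp
      moreover have "p x = x" using pp xn False by (auto intro: permutes_not_in)
      ultimately show ?thesis by simp
    qed
  qed
  have "Fm n w = p"
  proof
    fix x
    have "Fm n w x = w (sig n (inv w x))" unfolding Fm_def by simp
    also have "\<dots> = p (w (inv w x))" using key by simp
    also have "\<dots> = p x" using permutes_inverses(1)[OF wp] by simp
    finally show "Fm n w x = p x" .
  qed
  then show "Fm (Suc m) (Gm (Suc m) p) = p" unfolding w_def n_def .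
qed


lemma equiv:
  fixes w :: "nat \<Rightarrow> nat" and m :: nat
  assumes w: "w permutes {1..m}" and m: "1 \<le> m"
  shows "Fm (Suc m) w \<in> C321 (Suc m) \<longleftrightarrow> w \<in> A_set m"
proof -
  define p where "p = Fm (Suc m) w"
  have pp: "p permutes {1..Suc m}" using fwd(1)[OF w m] unfolding p_def .
  have cyc: "cyclic_perm (Suc m) p" using fwd(4)[OF w m] unfolding p_def .
  have hw: "p (w i) = w (Suc i)" if "1 \<le> i" "i \<le> m" for i
    using fwd(2)[OF w m, of i] that unfolding p_def sig_def by simp
  have wSm: "w (Suc m) = Suc m" using w by (simp add: permutes_not_in)
  have hn: "p (Suc m) = w 1"
    using fwd(2)[OF w m, of "Suc m"] wSm unfolding p_def sig_def by simp
  have "contains321 (Suc m) p \<longleftrightarrow>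
     has_3241 m w \<or> has_1423 m w \<or> has_4132 m w \<or> has_2314 m w \<or> has_231 m w \<or> has_132 m w"
    using L1[OF pp] L2[OF w m, of p] hw hn by simp
  then show ?thesis using cyc w unfolding p_def C321_def A_set_def by auto
qed

theorem mainTheorem2:
  fixes n :: nat
  assumes "n \<ge> 2"
  shows "card (C321 n) = card (A_set (n - 1))"
proof -
  obtain m where n: "n = Suc m" and m: "1 \<le> m" using assms by (metis Suc_le_D Suc_le_mono one_add_one plus_1_eq_Suc)
  have "bij_betw (Fm n) (A_set m) (C321 n)"
  proof (rule bij_betw_byWitness[where f' = "Gm n"])
    show "\<forall>a\<in>A_set m. Gm n (Fm n a) = a" using fwd(5) m unfolding n A_set_def by blast
    show "\<forall>a\<in>C321 n. Fm n (Gm n a) = a" using bwd(2) m unfolding n C321_def by blast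
    show "Fm n ` A_set m \<subseteq> C321 n" using equiv m unfolding n A_set_def by blast
    show "Gm n ` C321 n \<subseteq> A_set m"
    proof
      fix y assume "y \<in> Gm n ` C321 n"
      then obtain p where p: "p \<in> C321 n" "y = Gm n p" by blast
      have c: "cyclic_perm (Suc m) p" using p unfolding n C321_def by simp
      have yp: "y permutes {1..m}" using bwd(1)[OF c m] p n by simp
      have "Fm (Suc m) y = p" using bwd(2)[OF c m] p n by simp
      then show "y \<in> A_set m" using equiv[OF yp m] p n by simp
    qed
  qed
  then have "card (A_set m) = card (C321 n)" by (rule bij_betw_same_card)
  then show ?thesis using n by simp
qed

end
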